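(* Let $E$ be a finite-dimensional real Euclidean space with inner product $\langle\cdot,\cdot\rangle$, let $\|\cdot\|_{(1)},\dots,\|\cdot\|_{(n)}$ be norms on $E$, and for each $i$ let $\mathrm{LMO}_i$ be a linear minimization oracle for the unit ball of $\|\cdot\|_{(i)}$, i.e. $\mathrm{LMO}_i(\mathbf{M})\in\arg\min_{\|\mathbf{D}\|_{(i)}\le1}\langle\mathbf{M},\mathbf{D}\rangle$. Consider the LMO-based algorithms $\mathbf{X}^{t+1}-\mathbf{X}^t=\gamma_t\,\mathrm{LMO}_i(\mathbf{M}^t)$, $i=1,\dots,n$. For arbitrary $\alpha_1,\dots,\alpha_n\ge 0$, not all zero, the algorithm with update $$\mathbf{X}^{t+1}-\mathbf{X}^t=\gamma_t\sum_{i=1}^n\alpha_i\,\mathrm{LMO}_i(\mathbf{M}^t)$$ is itself an LMO-based algorithm: its update is $\mathbf{X}^{t+1}-\mathbf{X}^t=\gamma_t\,\mathrm{LMO}(\mathbf{M}^t)$ where $\mathrm{LMO}(\mathbf{M})\in\arg\min_{\|\mathbf{D}\|\le1}\langle\mathbf{M},\mathbf{D}\rangle$ is a linear minimization oracle for the unit ball of the norm $\|\cdot\|$ dual to $\sum_{i=1}^n\alpha_i\|\cdot\|_{(i)}^\dagger$.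
   Context: For a norm $\|\cdot\|$ on $E$, its dual norm is $\|\mathbf{M}\|^\dagger=\sup_{\|\mathbf{D}\|\le1}\langle\mathbf{M},\mathbf{D}\rangle$. Here $\mathbf{M}^t\in E$ denotes the effective update direction at iteration $t$ (e.g. a stochastic gradient or a momentum buffer) and $\gamma_t>0$ is the step size; an LMO-based algorithm is one whose update has the form $\mathbf{X}^{t+1}=\mathbf{X}^t+\gamma_t\,\mathrm{LMO}(\mathbf{M}^t)$ for an LMO over the unit ball of some norm. *)

theory Defs
  imports "HOL-Analysis.Analysis"
begin

definition is_norm :: "('a::euclidean_space \<Rightarrow> real) \<Rightarrow> bool" where
  "is_norm N \<longleftrightarrow>
     (\<forall>x. 0 \<le> N x) \<and> (\<forall>x. N x = 0 \<longleftrightarrow> x = 0) \<and>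
     (\<forall>c x. N (c *\<^sub>R x) = \<bar>c\<bar> * N x) \<and> (\<forall>x y. N (x + y) \<le> N x + N y)"

definition dual_norm :: "('a::euclidean_space \<Rightarrow> real) \<Rightarrow> 'a \<Rightarrow> real" where
  "dual_norm N M = Sup {M \<bullet> D | D. N D \<le> 1}"

definition is_LMO :: "('a::euclidean_space \<Rightarrow> real) \<Rightarrow> ('a \<Rightarrow> 'a) \<Rightarrow> bool" where
  "is_LMO N L \<longleftrightarrow> (\<forall>M. N (L M) \<le> 1 \<and> (\<forall>D. N D \<le> 1 \<longrightarrow> M \<bullet> L M \<le> M \<bullet> D))"

end

theory Submission
  imports Defs
begin

lemma nz: "is_norm N \<Longrightarrow> N 0 = 0"
  unfolding is_norm_def by auto

lemma nneg: "is_norm N \<Longrightarrow> N (-x) = N x"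
proof -
  assume a: "is_norm N"
  have "N ((-1) *\<^sub>R x) = \<bar>-1\<bar> * N x" using a unfolding is_norm_def by blast
  then show ?thesis by simp
qed

lemma nsum: assumes nn: "is_norm N" and fin: "finite A" shows "N (sum f A) \<le> (\<Sum>a\<in>A. N (f a))"
  using fin
proof (induction A rule: finite_induct)
  case empty then show ?case using nz[OF nn] by simp
next
  case (insert a F)
  have "N (f a + sum f F) \<le> N (f a) + N (sum f F)" using nn unfolding is_norm_def by blast
  then show ?case using insert by simp
qed

lemma nupper: assumes "is_norm N" shows "\<exists>C>0. \<forall>x. N x \<le> C * norm x"
proof (intro exI[of _ "1 + (\<Sum>b\<in>Basis. N b)"] conjI allI)
  have "\<forall>b. 0 \<le> N b" using assms unfolding is_norm_def by blast
  then have s0: "0 \<le> (\<Sum>b\<in>Basis. N b)" by (simp add: sum_nonneg)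
  then show "0 < 1 + (\<Sum>b\<in>Basis. N b)" by simp
  fix x :: 'a
  have "N x = N (\<Sum>b\<in>Basis. (x \<bullet> b) *\<^sub>R b)" by (simp add: euclidean_representation)
  also have "\<dots> \<le> (\<Sum>b\<in>Basis. N ((x \<bullet> b) *\<^sub>R b))" by (rule nsum[OF assms]) simp
  also have "\<dots> = (\<Sum>b\<in>Basis. \<bar>x \<bullet> b\<bar> * N b)" using assms unfolding is_norm_def by simp
  also have "\<dots> \<le> (\<Sum>b\<in>Basis. norm x * N b)"
    by (rule sum_mono) (simp add: Basis_le_norm \<open>\<forall>b. 0 \<le> N b\<close> mult_right_mono)
  also have "\<dots> = norm x * (\<Sum>b\<in>Basis. N b)" by (simp add: sum_distrib_left)
  also have "\<dots> \<le> (1 + (\<Sum>b\<in>Basis. N b)) * norm x" using s0 by (simp add: algebra_simps)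
  finally show "N x \<le> (1 + (\<Sum>b\<in>Basis. N b)) * norm x" .
qed

lemma ncont: assumes "is_norm N" shows "continuous_on S N"
proof -
  obtain C where C: "C > 0" "\<forall>x. N x \<le> C * norm x" using nupper[OF assms] by blast
  have "C-lipschitz_on S N"
  proof (rule lipschitz_onI)
    fix x y :: 'a
    have t: "N x \<le> N (x - y) + N y" "N y \<le> N (y - x) + N x"
      using assms unfolding is_norm_def by (metis diff_add_cancel)+
    have "N (y - x) = N (x - y)" using nneg[OF assms, of "x - y"] by simp
    then show "dist (N x) (N y) \<le> C * dist x y"
      using t C(2)[rule_format, of "x - y"] by (simp add: dist_real_def dist_norm abs_le_iff)
  qed (use C in simp)
  then show ?thesis by (rule lipschitz_on_continuous_on)
qed

lemma nlower: assumes "is_norm N" shows "\<exists>c>0. \<forall>x. c * norm x \<le> N x"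
proof -
  have ne: "sphere (0::'a) 1 \<noteq> {}" using vector_choose_size[of 1] by auto
  obtain x0 where x0: "x0 \<in> sphere 0 1" "\<forall>y\<in>sphere 0 1. N x0 \<le> N y"
    using continuous_attains_inf[OF compact_sphere ne ncont[OF assms]] by blast
  have "x0 \<noteq> 0" using x0 by auto
  then have pos: "N x0 > 0" using assms unfolding is_norm_def by (metis less_eq_real_def)
  show ?thesis
  proof (intro exI[of _ "N x0"] conjI allI pos)
    fix x :: 'a
    show "N x0 * norm x \<le> N x"
    proof (cases "x = 0")
      case True then show ?thesis using nz[OF assms] by simp
    next
      case False
      have "N x0 \<le> N ((1 / norm x) *\<^sub>R x)" using x0 False by simp
      also have "\<dots> = N x / norm x" using assms unfolding is_norm_def by simp
      finally show ?thesis using False by (simp add: field_simps)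
    qed
  qed
qed

lemma dbdd: assumes "is_norm N" shows "bdd_above {M \<bullet> D | D. N D \<le> 1}"
proof -
  obtain c where c: "c > 0" "\<forall>x. c * norm x \<le> N x" using nlower[OF assms] by blast
  show ?thesis
  proof (rule bdd_aboveI[of _ "norm M / c"])
    fix y assume "y \<in> {M \<bullet> D | D. N D \<le> 1}"
    then obtain D where D: "y = M \<bullet> D" "N D \<le> 1" by blast
    have "norm D \<le> 1 / c" using c D(2) by (smt (verit, ccfv_SIG) mult.commute pos_le_divide_eq)
    then have "norm M * norm D \<le> norm M * (1 / c)" by (intro mult_left_mono) auto
    then show "y \<le> norm M / c" using D(1) norm_cauchy_schwarz[of M D] by simp
  qed
qed

lemma dupper: "is_norm N \<Longrightarrow> N D \<le> 1 \<Longrightarrow> M \<bullet> D \<le> dual_norm N M"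
  unfolding dual_norm_def by (rule cSup_upper) (auto intro: dbdd)

lemma dleast: assumes "is_norm N" "\<And>D. N D \<le> 1 \<Longrightarrow> M \<bullet> D \<le> B" shows "dual_norm N M \<le> B"
  unfolding dual_norm_def
proof (rule cSup_least)
  have "N 0 \<le> 1" using nz[OF assms(1)] by simp
  then have "M \<bullet> 0 \<in> {M \<bullet> D |D. N D \<le> 1}" by blast
  then show "{M \<bullet> D |D. N D \<le> 1} \<noteq> {}" by blast
qed (use assms(2) in auto)

lemma dhom_le: assumes nn: "is_norm N" shows "dual_norm N (c *\<^sub>R M) \<le> \<bar>c\<bar> * dual_norm N M"
proof (rule dleast[OF nn])
  fix D assume D: "N D \<le> 1"
  have "N (sgn c *\<^sub>R D) = \<bar>sgn c\<bar> * N D" using nn unfolding is_norm_def by blast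
  also have "\<dots> \<le> 1 * 1" using D nn unfolding is_norm_def
    by (intro mult_mono) (auto simp: sgn_real_def)
  finally have "N (sgn c *\<^sub>R D) \<le> 1" by simp
  then have "M \<bullet> (sgn c *\<^sub>R D) \<le> dual_norm N M" by (rule dupper[OF nn])
  then have "\<bar>c\<bar> * (M \<bullet> (sgn c *\<^sub>R D)) \<le> \<bar>c\<bar> * dual_norm N M" by (simp add: mult_left_mono)
  moreover have "(c *\<^sub>R M) \<bullet> D = \<bar>c\<bar> * (M \<bullet> (sgn c *\<^sub>R D))"
  proof -
    have "\<bar>c\<bar> * (M \<bullet> (sgn c *\<^sub>R D)) = (\<bar>c\<bar> * sgn c) * (M \<bullet> D)" by simp
    also have "\<bar>c\<bar> * sgn c = c" by (rule abs_mult_sgn)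
    finally show ?thesis using inner_scaleR_left by metis
  qed
  ultimately show "(c *\<^sub>R M) \<bullet> D \<le> \<bar>c\<bar> * dual_norm N M" by (metis ord_eq_le_trans)
qed

lemma dual_is_norm: assumes nn: "is_norm N" shows "is_norm (dual_norm N)"
proof -
  have n0: "N 0 \<le> 1" using nz[OF nn] by simp
  have pos: "0 \<le> dual_norm N M" for M using dupper[OF nn n0, of M] by simp
  have z0: "dual_norm N 0 = 0"
    using dleast[OF nn, of 0 0] pos[of 0] by simp
  have zi: "dual_norm N M = 0 \<longleftrightarrow> M = 0" for M
  proof
    assume h: "dual_norm N M = 0"
    show "M = 0"
    proof (rule ccontr)
      assume "M \<noteq> 0"
      then have p: "N M > 0" using nn unfolding is_norm_def by (metis less_eq_real_def)
      have "N ((1 / N M) *\<^sub>R M) = 1" using p \<open>M \<noteq> 0\<close> nn unfolding is_norm_def by simp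
      then have "N ((1 / N M) *\<^sub>R M) \<le> 1" by simp
      then have "M \<bullet> ((1 / N M) *\<^sub>R M) \<le> dual_norm N M" by (rule dupper[OF nn])
      then have "(1 / N M) * (M \<bullet> M) \<le> 0" using h by simp
      then have "(M \<bullet> M) / N M \<le> 0" by simp
      then have "M \<bullet> M \<le> 0" using p by (simp add: divide_le_0_iff)
      then show False using \<open>M \<noteq> 0\<close> by (metis inner_gt_zero_iff not_le)
    qed
  qed (use z0 in simp)
  have hom: "dual_norm N (c *\<^sub>R M) = \<bar>c\<bar> * dual_norm N M" for c M
  proof (cases "c = 0")
    case True then show ?thesis using z0 by simp
  next
    case False
    have "dual_norm N M = dual_norm N ((1/c) *\<^sub>R (c *\<^sub>R M))" using False by simp
    also have "\<dots> \<le> \<bar>1/c\<bar> * dual_norm N (c *\<^sub>R M)" by (rule dhom_le[OF nn])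
    finally have "\<bar>c\<bar> * dual_norm N M \<le> dual_norm N (c *\<^sub>R M)"
      using False by (simp add: field_simps)
    then show ?thesis using dhom_le[OF nn, of c M] by simp
  qed
  have tri: "dual_norm N (x + y) \<le> dual_norm N x + dual_norm N y" for x y
  proof (rule dleast[OF nn])
    fix D assume "N D \<le> 1"
    then show "(x + y) \<bullet> D \<le> dual_norm N x + dual_norm N y"
      using dupper[OF nn, of D x] dupper[OF nn, of D y] by (simp add: inner_add_left)
  qed
  show ?thesis unfolding is_norm_def using pos zi hom tri by blast
qed

lemma comb_is_norm:
  fixes P :: "nat \<Rightarrow> 'a::euclidean_space \<Rightarrow> real"
  assumes P: "\<forall>i<n. is_norm (P i)" and nonneg: "\<forall>i<n. 0 \<le> \<alpha> i" and nonzero: "\<exists>i<n. \<alpha> i \<noteq> 0"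
  shows "is_norm (\<lambda>M. \<Sum>i<n. \<alpha> i * P i M)"
proof -
  have Pp: "i < n \<Longrightarrow> 0 \<le> P i x" for i x using P unfolding is_norm_def by blast
  have pos: "0 \<le> (\<Sum>i<n. \<alpha> i * P i x)" for x
    using Pp nonneg by (intro sum_nonneg) simp
  have zi: "(\<Sum>i<n. \<alpha> i * P i x) = 0 \<longleftrightarrow> x = 0" for x
  proof
    assume h: "(\<Sum>i<n. \<alpha> i * P i x) = 0"
    obtain j where j: "j < n" "\<alpha> j \<noteq> 0" using nonzero by blast
    have "\<forall>i\<in>{..<n}. \<alpha> i * P i x = 0"
      using h Pp nonneg by (subst sum_nonneg_eq_0_iff[symmetric]) auto
    then have "P j x = 0" using j by auto
    then show "x = 0" using P j unfolding is_norm_def by blast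
  next
    assume "x = 0"
    have "\<And>i. i < n \<Longrightarrow> P i 0 = 0" using P nz by blast
    then show "(\<Sum>i<n. \<alpha> i * P i x) = 0" using \<open>x = 0\<close> by (auto intro!: sum.neutral)
  qed
  have hom: "(\<Sum>i<n. \<alpha> i * P i (c *\<^sub>R x)) = \<bar>c\<bar> * (\<Sum>i<n. \<alpha> i * P i x)" for c x
  proof -
    have "(\<Sum>i<n. \<alpha> i * P i (c *\<^sub>R x)) = (\<Sum>i<n. \<bar>c\<bar> * (\<alpha> i * P i x))"
      using P unfolding is_norm_def by (intro sum.cong) auto
    then show ?thesis by (simp add: sum_distrib_left)
  qed
  have tri: "(\<Sum>i<n. \<alpha> i * P i (x + y)) \<le> (\<Sum>i<n. \<alpha> i * P i x) + (\<Sum>i<n. \<alpha> i * P i y)" for x y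
  proof -
    have "(\<Sum>i<n. \<alpha> i * P i (x + y)) \<le> (\<Sum>i<n. \<alpha> i * P i x + \<alpha> i * P i y)"
    proof (rule sum_mono)
      fix i assume "i \<in> {..<n}"
      then have "P i (x + y) \<le> P i x + P i y" "0 \<le> \<alpha> i" using P nonneg unfolding is_norm_def by auto
      then show "\<alpha> i * P i (x + y) \<le> \<alpha> i * P i x + \<alpha> i * P i y"
        by (metis distrib_left mult_left_mono)
    qed
    then show ?thesis by (simp add: sum.distrib)
  qed
  show ?thesis unfolding is_norm_def using pos zi hom tri by blast
qed

theorem corollary5:
  fixes Nrm :: "nat \<Rightarrow> 'a::euclidean_space \<Rightarrow> real"
    and LMO :: "nat \<Rightarrow> 'a \<Rightarrow> 'a"
    and \<alpha> :: "nat \<Rightarrow> real"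
    and n :: nat
  assumes norms: "\<forall>i<n. is_norm (Nrm i)"
    and lmos: "\<forall>i<n. is_LMO (Nrm i) (LMO i)"
    and nonneg: "\<forall>i<n. 0 \<le> \<alpha> i"
    and nonzero: "\<exists>i<n. \<alpha> i \<noteq> 0"
  shows "is_norm (dual_norm (\<lambda>M. \<Sum>i<n. \<alpha> i * dual_norm (Nrm i) M))
       \<and> is_LMO (dual_norm (\<lambda>M. \<Sum>i<n. \<alpha> i * dual_norm (Nrm i) M))
                (\<lambda>M. \<Sum>i<n. \<alpha> i *\<^sub>R LMO i M)"
proof -
  define \<Phi> where "\<Phi> = (\<lambda>M. \<Sum>i<n. \<alpha> i * dual_norm (Nrm i) M)"
  have dn: "\<forall>i<n. is_norm (dual_norm (Nrm i))" using norms dual_is_norm by blast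
  have Phi: "is_norm \<Phi>" unfolding \<Phi>_def by (rule comb_is_norm[OF dn nonneg nonzero])
  have N: "is_norm (dual_norm \<Phi>)" by (rule dual_is_norm[OF Phi])
  have L1: "dual_norm \<Phi> (\<Sum>i<n. \<alpha> i *\<^sub>R LMO i M) \<le> 1" for M
  proof (rule dleast[OF Phi])
    fix X assume X: "\<Phi> X \<le> 1"
    have "(\<Sum>i<n. \<alpha> i *\<^sub>R LMO i M) \<bullet> X = (\<Sum>i<n. \<alpha> i * (X \<bullet> LMO i M))"
      unfolding inner_sum_left by (intro sum.cong refl) (metis inner_commute inner_scaleR_left)
    also have "\<dots> \<le> \<Phi> X" unfolding \<Phi>_def
    proof (rule sum_mono)
      fix i assume i: "i \<in> {..<n}"
      then have "Nrm i (LMO i M) \<le> 1" using lmos unfolding is_LMO_def by blast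
      then have "X \<bullet> LMO i M \<le> dual_norm (Nrm i) X" using dupper norms i by blast
      then show "\<alpha> i * (X \<bullet> LMO i M) \<le> \<alpha> i * dual_norm (Nrm i) X"
        using nonneg i by (simp add: mult_left_mono)
    qed
    finally show "(\<Sum>i<n. \<alpha> i *\<^sub>R LMO i M) \<bullet> X \<le> 1" using X by simp
  qed
  have L2: "M \<bullet> (\<Sum>i<n. \<alpha> i *\<^sub>R LMO i M) \<le> M \<bullet> D" if D: "dual_norm \<Phi> D \<le> 1" for M D
  proof -
    have "M \<bullet> (\<Sum>i<n. \<alpha> i *\<^sub>R LMO i M) = (\<Sum>i<n. \<alpha> i * (M \<bullet> LMO i M))"
      by (simp add: inner_sum_right)
    also have "\<dots> \<le> (\<Sum>i<n. \<alpha> i * (- dual_norm (Nrm i) M))"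
    proof (rule sum_mono)
      fix i assume i: "i \<in> {..<n}"
      have "dual_norm (Nrm i) M \<le> - (M \<bullet> LMO i M)"
      proof (rule dleast)
        show "is_norm (Nrm i)" using norms i by blast
        fix D' assume "Nrm i D' \<le> 1"
        moreover have "is_norm (Nrm i)" using norms i by blast
        ultimately have "Nrm i (- D') \<le> 1" using nneg by metis
        then have "M \<bullet> LMO i M \<le> M \<bullet> (- D')" using lmos i unfolding is_LMO_def by blast
        then show "M \<bullet> D' \<le> - (M \<bullet> LMO i M)" by simp
      qed
      then have "\<alpha> i * dual_norm (Nrm i) M \<le> \<alpha> i * (- (M \<bullet> LMO i M))"
        using nonneg i by (intro mult_left_mono) auto
      then show "\<alpha> i * (M \<bullet> LMO i M) \<le> \<alpha> i * (- dual_norm (Nrm i) M)" by simp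
    qed
    also have "\<dots> = - \<Phi> M" unfolding \<Phi>_def by (simp add: sum_negf)
    also have "\<dots> \<le> M \<bullet> D"
    proof (cases "\<Phi> M = 0")
      case True
      then have "M = 0" using Phi unfolding is_norm_def by blast
      then show ?thesis using True by simp
    next
      case False
      then have p: "\<Phi> M > 0" using Phi unfolding is_norm_def by (metis less_eq_real_def)
      have "\<Phi> ((- (1 / \<Phi> M)) *\<^sub>R M) = \<bar>- (1 / \<Phi> M)\<bar> * \<Phi> M"
        using Phi unfolding is_norm_def by blast
      also have "\<dots> = 1" using p by simp
      finally have "\<Phi> ((- (1 / \<Phi> M)) *\<^sub>R M) = 1" .
      then have "\<Phi> ((- (1 / \<Phi> M)) *\<^sub>R M) \<le> 1" by simp
      then have "D \<bullet> ((- (1 / \<Phi> M)) *\<^sub>R M) \<le> dual_norm \<Phi> D" by (rule dupper[OF Phi])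
      then have "- (M \<bullet> D) / \<Phi> M \<le> 1" using D by (simp add: inner_commute)
      then have "- (M \<bullet> D) \<le> \<Phi> M" using p by (simp add: divide_le_eq le_divide_eq)
      then show ?thesis by simp
    qed
    finally show ?thesis .
  qed
  show ?thesis unfolding \<Phi>_def[symmetric] is_LMO_def using N L1 L2 by blast
qed

end
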